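(* Consider the graded cluster algebra $\mathcal{A}\big((x_1,x_2,x_3),B,(1,1,2)\big)$ with $B=\begin{pmatrix}0&2&-1\\-2&0&1\\1&-1&0\end{pmatrix}$. The only degrees of cluster variables that occur are $1,-1,2,-2$.
   Context: Graded cluster algebras: for a $3\times3$ skew-symmetric integer matrix $B=(b_{ij})$ and $k\in\{1,2,3\}$, $\mu_k(B)=(b'_{ij})$ with $b'_{ij}=-b_{ij}$ if $i=k$ or $j=k$ and $b'_{ij}=b_{ij}+\operatorname{sgn}(b_{ik})\max(b_{ik}b_{kj},0)$ otherwise. A seed $((x_1,x_2,x_3),B)$ mutates in direction $k$ to $(x',\mu_k B)$ with $x'_j=x_j$ ($j\ne k$) and $x'_k=\big(\prod_{b_{ik}>0}x_i^{b_{ik}}+\prod_{b_{ik}<0}x_i^{-b_{ik}}\big)/x_k$. Cluster variables are all entries of clusters reachable by iterated mutation; $\mathcal{A}(x,B,g)$ is the algebra they generate, graded by $\deg x_i=g_i$ where $Bg=0$; under mutation at $k$ the degree vector becomes $g'$ with $g'_j=g_j$ ($j\neq k$), $g'_k=-g_k+\sum_{b_{ik}>0}b_{ik}g_i$, and every cluster variable is homogeneous of the degree recorded in any seed containing it. *)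

theory Defs
  imports Complex_Main
begin

(* Indices 1,2,3 of the paper are represented by 0,1,2.
   Exchange matrices: nat => nat => int (only entries with indices < 3 matter).
   Cluster variables: rational functions in x1,x2,x3, represented by their
   evaluation maps (nat => real) => real. *)

type_synonym mat3 = "nat \<Rightarrow> nat \<Rightarrow> int"
type_synonym ratfun = "(nat \<Rightarrow> real) \<Rightarrow> real"

definition mutB :: "nat \<Rightarrow> mat3 \<Rightarrow> mat3" where
  "mutB k B = (\<lambda>i j. if i = k \<or> j = k then - B i j
                     else B i j + sgn (B i k) * max (B i k * B k j) 0)"

definition mutx :: "nat \<Rightarrow> mat3 \<Rightarrow> (nat \<Rightarrow> ratfun) \<Rightarrow> (nat \<Rightarrow> ratfun)" where
  "mutx k B x = (\<lambda>j. if j = k then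
      (\<lambda>v. ((\<Prod>i\<in>{i. i < 3 \<and> B i k > 0}. x i v ^ nat (B i k))
           + (\<Prod>i\<in>{i. i < 3 \<and> B i k < 0}. x i v ^ nat (- B i k))) / x k v)
    else x j)"

definition mutg :: "nat \<Rightarrow> mat3 \<Rightarrow> (nat \<Rightarrow> int) \<Rightarrow> (nat \<Rightarrow> int)" where
  "mutg k B g = (\<lambda>j. if j = k then - g k + (\<Sum>i\<in>{i. i < 3 \<and> B i k > 0}. B i k * g i)
                      else g j)"

inductive reachable :: "(nat \<Rightarrow> ratfun) \<Rightarrow> mat3 \<Rightarrow> (nat \<Rightarrow> int)
      \<Rightarrow> (nat \<Rightarrow> ratfun) \<Rightarrow> mat3 \<Rightarrow> (nat \<Rightarrow> int) \<Rightarrow> bool"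
  for x0 B0 g0 where
  init: "reachable x0 B0 g0 x0 B0 g0"
| step: "reachable x0 B0 g0 x B g \<Longrightarrow> k < 3 \<Longrightarrow>
         reachable x0 B0 g0 (mutx k B x) (mutB k B) (mutg k B g)"

definition Bex :: mat3 where
  "Bex = (\<lambda>i j. if i = 0 \<and> j = 1 then 2 else if i = 1 \<and> j = 0 then -2
             else if i = 0 \<and> j = 2 then -1 else if i = 2 \<and> j = 0 then 1
             else if i = 1 \<and> j = 2 then 1 else if i = 2 \<and> j = 1 then -1 else 0)"

definition gex :: "nat \<Rightarrow> int" where
  "gex = (\<lambda>i. if i = 0 then 1 else if i = 1 then 1 else if i = 2 then 2 else 0)"

definition xinit :: "nat \<Rightarrow> ratfun" where
  "xinit = (\<lambda>i v. v i)"

definition cluster_degrees :: "(nat \<Rightarrow> ratfun) \<Rightarrow> mat3 \<Rightarrow> (nat \<Rightarrow> int) \<Rightarrow> int set" where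
  "cluster_degrees x0 B0 g0 =
     {d. \<exists>z x B g k. reachable x0 B0 g0 x B g \<and> k < 3 \<and> x k = z \<and> g k = d}"

end

theory Submission
  imports Defs
begin

definition tup :: "mat3 \<Rightarrow> (nat \<Rightarrow> int) \<Rightarrow> int list" where
  "tup B g = [B 0 0, B 0 1, B 0 2, B 1 0, B 1 1, B 1 2, B 2 0, B 2 1, B 2 2, g 0, g 1, g 2]"

definition LL :: "int list list" where
  "LL = [[0, 1, 1, -1, 0, -1, -1, 1, 0, -1, -1, 1], [0, 1, -1, -1, 0, -1, 1, 1, 0, 1, -1, -1], [0, -1, -1, 1, 0, -1, 1, 1, 0, 1, -1, 1], [0, -1, -1, 1, 0, 1, 1, -1, 0, 1, 1, -1], [0, 1, -2, -1, 0, 1, 2, -1, 0, 1, 2, 1], [0, -2, 1, 2, 0, -1, -1, 1, 0, -1, -1, -2], [0, -1, -1, 1, 0, -1, 1, 1, 0, -1, 1, -1], [0, -1, 2, 1, 0, -1, -2, 1, 0, 1, 2, 1], [0, 1, 1, -1, 0, 1, -1, -1, 0, 1, -1, 1], [0, -1, 1, 1, 0, -2, -1, 2, 0, 2, 1, 1], [0, -1, 1, 1, 0, 1, -1, -1, 0, -1, 1, 1], [0, -1, -1, 1, 0, 1, 1, -1, 0, -1, -1, 1], [0, -2, 1, 2, 0, -1, -1, 1, 0, 1, 1, 2], [0, 1, -1, -1, 0, 2, 1, -2, 0, -2, -1, -1], [0, -1, 1, 1, 0, 1, -1, -1, 0, 1, -1, -1], [0, 1, 1, -1, 0, 1, -1,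 -1, 0, -1, 1, -1], [0, 2, -1, -2, 0, 1, 1, -1, 0, -1, -1, -2], [0, 1, -2, -1, 0, 1, 2, -1, 0, -1, -2, -1], [0, 2, -1, -2, 0, 1, 1, -1, 0, 1, 1, 2], [0, -1, 2, 1, 0, -1, -2, 1, 0, -1, -2, -1], [0, 1, 1, -1, 0, -1, -1, 1, 0, 1, 1, -1], [0, 1, -1, -1, 0, 2, 1, -2, 0, 2, 1, 1], [0, -1, 1, 1, 0, -2, -1, 2, 0, -2, -1, -1], [0, 1, -1, -1, 0, -1, 1, 1, 0, -1, 1, 1]]"

lemma sum3: "(\<Sum>i\<in>{i. i < (3::nat) \<and> P i}. f i) =
   (if P 0 then f 0 else 0) + (if P 1 then f 1 else 0) + (if P 2 then f 2 else (0::int))"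
proof -
  have e: "{i. i < (3::nat) \<and> P i} = {i\<in>{..<3}. P i}" by auto
  have "(\<Sum>i\<in>{i\<in>{..<(3::nat)}. P i}. f i) = (\<Sum>i<3. if P i then f i else 0)"
    by (rule sum.inter_filter) simp
  also have "\<dots> = (if P 0 then f 0 else 0) + (if P 1 then f 1 else 0) + (if P 2 then f 2 else (0::int))"
    by (simp add: numeral_3_eq_3 numeral_2_eq_2)
  finally show ?thesis unfolding e .
qed

definition mstep :: "nat \<Rightarrow> int list \<Rightarrow> int list" where
  "mstep k t = (let b = (\<lambda>i j. t ! (3*i+j)); gg = (\<lambda>i. t ! (9+i)) in
     tup (\<lambda>i j. if i = k \<or> j = k then - b i j
                     else b i j + sgn (b i k) * max (b i k * b k j) 0)
         (\<lambda>j. if j = k then - gg k + ((if b 0 k > 0 then b 0 k * gg 0 else 0)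
              + (if b 1 k > 0 then b 1 k * gg 1 else 0) + (if b 2 k > 0 then b 2 k * gg 2 else 0))
              else gg j))"

lemma mstep_eq:
  assumes "k < 3"
  shows "tup (mutB k B) (mutg k B g) = mstep k (tup B g)"
proof -
  have "k = 0 \<or> k = 1 \<or> k = 2" using assms(1) by auto
  then show ?thesis
    by (auto simp: tup_def mstep_def mutB_def mutg_def sum3 Let_def)
qed

lemma closed: "list_all (\<lambda>t. list_all (\<lambda>k. mstep k t \<in> set LL) [0,1,2]) LL"
  by code_simp

lemma stepinv:
  assumes "k < 3" "tup B g \<in> set LL"
  shows "tup (mutB k B) (mutg k B g) \<in> set LL"
proof -
  have "k \<in> set [0,1,2]" using assms(1) by auto
  then show ?thesis using closed assms(2) unfolding mstep_eq[OF assms(1)]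
    by (auto simp: list_all_iff)
qed

lemma reach_inv:
  assumes "reachable xinit Bex gex x B g"
  shows "tup B g \<in> set LL"
  using assms
proof (induction rule: reachable.induct)
  case init
  then show ?case by (simp add: tup_def LL_def Bex_def gex_def)
next
  case (step x B g k)
  then show ?case using stepinv by blast
qed

lemma degs: "tup B g \<in> set LL \<Longrightarrow> k < 3 \<Longrightarrow> g k \<in> {1, -1, 2, -2}"
proof -
  assume a: "tup B g \<in> set LL" "k < 3"
  have "k = 0 \<or> k = 1 \<or> k = 2" using a(2) by auto
  then show ?thesis using a(1) by (auto simp: tup_def LL_def)
qed

theorem mainTheorem4:
  shows "cluster_degrees xinit Bex gex = {1, -1, 2, -2}"
proof
  show "cluster_degrees xinit Bex gex \<subseteq> {1, -1, 2, -2}"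
    unfolding cluster_degrees_def using reach_inv degs by blast
next
  define B1 where "B1 = mutB 2 Bex"
  define g1 where "g1 = mutg 2 Bex gex"
  define x1 where "x1 = mutx 2 Bex xinit"
  define B2 where "B2 = mutB 0 B1"
  define g2 where "g2 = mutg 0 B1 g1"
  define x2 where "x2 = mutx 0 B1 x1"
  define B3 where "B3 = mutB 2 B2"
  define g3 where "g3 = mutg 2 B2 g2"
  define x3 where "x3 = mutx 2 B2 x2"
  define B4 where "B4 = mutB 1 B3"
  define g4 where "g4 = mutg 1 B3 g3"
  define x4 where "x4 = mutx 1 B3 x3"
  define B5 where "B5 = mutB 2 B4"
  define g5 where "g5 = mutg 2 B4 g4"
  define x5 where "x5 = mutx 2 B4 x4"
  have r0: "reachable xinit Bex gex xinit Bex gex" by (rule reachable.init)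
  have r5: "reachable xinit Bex gex x5 B5 g5"
    unfolding x5_def B5_def g5_def x4_def B4_def g4_def x3_def B3_def g3_def
      x2_def B2_def g2_def x1_def B1_def g1_def
    by (intro reachable.step r0) auto
  have "g5 0 = -1 \<and> g5 2 = -2"
    by (simp add: g5_def g4_def g3_def g2_def g1_def B4_def B3_def B2_def B1_def
        mutB_def mutg_def sum3 Bex_def gex_def)
  moreover have "gex 0 = 1" "gex 2 = 2" by (auto simp: gex_def)
  moreover have m: "\<And>x B g k. reachable xinit Bex gex x B g \<Longrightarrow> k < 3 \<Longrightarrow>
      g k \<in> cluster_degrees xinit Bex gex"
    unfolding cluster_degrees_def by blast
  ultimately show "{1, -1, 2, -2} \<subseteq> cluster_degrees xinit Bex gex"
    using m[OF r0, of 0] m[OF r0, of 2] m[OF r5, of 0] m[OF r5, of 2] by auto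
qed

end
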